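(* Let $\mathcal S$ carry a $\sigma$-finite measure $\lambda$ and let $\{P_\xi:\xi\in\Xi\}$, $\Xi\subseteq\mathbb R^d$, be transition kernels with true parameter $\xi^*$. Assume: (i) there is $M<\infty$ with $P_\xi(ds'\mid s,a)=p_\xi(s'\mid s,a)\lambda(ds')$, $0\le p_\xi\le M$, and $\xi\mapsto p_\xi(s'\mid s,a)$ continuous; (ii) there is $c>0$ with $q_\phi(s'\mid s,a)\ge c$ for every transition $(s,a,s')$ in the dataset and every $\phi\in\Phi$; (iii) if $q_\phi(\cdot\mid s,a)=p_{\xi^*}(\cdot\mid s,a)$ for all $(s,a)\in\mathcal S\times\mathcal A$ then $\phi=(\xi^*,0)$. Then the population log-likelihood $L(\phi)=\mathbb E_{(s,a,s')\sim P_{\xi^*}}[\log q_\phi(s'\mid s,a)]$ has the unique maximizer $\phi^*=(\mu^*,\Sigma^* )=(\xi^*,0)$ over $\Phi$.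
   Context: $\Phi$ is a set of pairs $\phi=(\mu,\Sigma)$ with $\mu\in\mathbb R^d$ and $\Sigma$ positive semidefinite; $P_\phi=\mathcal N(\mu,\Sigma)$ (degenerate allowed), and $q_\phi(s'\mid s,a)=\int p_\xi(s'\mid s,a)\,P_\phi(d\xi)$. $(s,a,s')\sim P_{\xi^*}$ means $(s,a)$ is drawn from a fixed behavior distribution and $s'\sim P_{\xi^*}(\cdot\mid s,a)$. *)

theory Defs
  imports "HOL-Probability.Probability"
begin

definition psd :: "real^'n^'n \<Rightarrow> bool" where
  "psd S \<longleftrightarrow> transpose S = S \<and> (\<forall>x. 0 \<le> x \<bullet> (S *v x))"

definition std_gauss :: "(real^'n) measure" where
  "std_gauss = density lborel
     (\<lambda>x. ennreal ((2 * pi) powr (- real CARD('n) / 2) * exp (- (norm x)\<^sup>2 / 2)))"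

text \<open>Gaussian N(mu, S), possibly degenerate: law of mu + L z with z standard Gaussian
  and L L^T = S (the law does not depend on the choice of L).\<close>
definition gauss :: "real^'n \<Rightarrow> real^'n^'n \<Rightarrow> (real^'n) measure" where
  "gauss mu S = distr std_gauss borel (\<lambda>z. mu + (SOME L :: real^'n^'n. L ** transpose L = S) *v z)"

definition kernel_meas ::
  "'s measure \<Rightarrow> (real^'d \<Rightarrow> 's \<Rightarrow> 'a \<Rightarrow> 's \<Rightarrow> real) \<Rightarrow> real^'d \<Rightarrow> 's \<Rightarrow> 'a \<Rightarrow> 's measure" where
  "kernel_meas lam p xi s a = density lam (\<lambda>s'. ennreal (p xi s a s'))"

definition mix_density ::
  "(real^'d \<Rightarrow> 's \<Rightarrow> 'a \<Rightarrow> 's \<Rightarrow> real) \<Rightarrow> (real^'d) \<times> (real^'d^'d) \<Rightarrow> 's \<Rightarrow> 'a \<Rightarrow> 's \<Rightarrow> real" where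
  "mix_density p phi s a s' = (\<integral>xi. p xi s a s' \<partial>gauss (fst phi) (snd phi))"

definition pop_loglik ::
  "('s \<times> 'a) measure \<Rightarrow> 's measure \<Rightarrow> (real^'d \<Rightarrow> 's \<Rightarrow> 'a \<Rightarrow> 's \<Rightarrow> real) \<Rightarrow> real^'d
     \<Rightarrow> (real^'d) \<times> (real^'d^'d) \<Rightarrow> real" where
  "pop_loglik D lam p xis phi =
     (\<integral>sa. (\<integral>s'. ln (mix_density p phi (fst sa) (snd sa) s')
               \<partial>kernel_meas lam p xis (fst sa) (snd sa)) \<partial>D)"

end

theory Submission
  imports Defs
begin

lemma l2: "(1 / sqrt (2 * pi)) ^ n = (2 * pi) powr (- real n / 2)"
proof -
  have "sqrt (2*pi) = (2*pi) powr (1/2)" by (simp add: powr_half_sqrt)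
  then have "sqrt (2*pi) ^ n = (2*pi) powr (real n/2)"
    by (simp add: powr_realpow[symmetric] powr_powr)
  then show ?thesis
    by (simp add: power_one_over powr_minus_divide)
qed

lemma gauss_factor:
  fixes x :: "real^'n"
  shows "(2 * pi) powr (- real CARD('n) / 2) * exp (- (norm x)\<^sup>2 / 2)
       = (\<Prod>b\<in>Basis. std_normal_density (x \<bullet> b))"
proof -
  have "(norm x)\<^sup>2 = x \<bullet> x" by (rule power2_norm_eq_inner)
  also have "\<dots> = (\<Sum>b\<in>Basis. (x \<bullet> b) * (x \<bullet> b))" by (rule euclidean_inner)
  also have "\<dots> = (\<Sum>b\<in>Basis. (x \<bullet> b)\<^sup>2)" by (simp only: power2_eq_square)
  finally have n: "(norm x)\<^sup>2 = (\<Sum>b\<in>Basis. (x \<bullet> b)\<^sup>2)" .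
  have "(\<Prod>b\<in>(Basis::(real^'n) set). std_normal_density (x \<bullet> b))
     = (\<Prod>b\<in>(Basis::(real^'n) set). (1 / sqrt (2 * pi)) * exp (- (x \<bullet> b)\<^sup>2 / 2))"
    by (simp add: std_normal_density_def)
  also have "\<dots> = (1 / sqrt (2 * pi)) ^ card (Basis::(real^'n) set) * exp (\<Sum>b\<in>Basis. - (x \<bullet> b)\<^sup>2 / 2)"
    by (simp only: prod.distrib prod_constant exp_sum[OF finite_Basis])
  also have "(1 / sqrt (2 * pi)) ^ card (Basis::(real^'n) set) = (2 * pi) powr (- real CARD('n) / 2)"
    using l2[of "CARD('n)"] by simp
  also have "(\<Sum>b\<in>(Basis::(real^'n) set). - (x \<bullet> b)\<^sup>2 / 2) = - (norm x)\<^sup>2 / 2"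
    unfolding n sum_divide_distrib[symmetric] sum_negf by simp
  finally show ?thesis by simp
qed

lemma std_gauss_prob: "prob_space (std_gauss :: (real^'n) measure)"
proof
  have "emeasure (std_gauss :: (real^'n) measure) (space std_gauss)
     = (\<integral>\<^sup>+x. ennreal ((2 * pi) powr (- real CARD('n) / 2) * exp (- (norm (x::real^'n))\<^sup>2 / 2)) \<partial>lborel)"
    unfolding std_gauss_def by (simp add: emeasure_density)
  also have "\<dots> = (\<integral>\<^sup>+x. (\<Prod>b\<in>(Basis::(real^'n) set). ennreal (std_normal_density (x \<bullet> b))) \<partial>lborel)"
    unfolding gauss_factor by (simp add: prod_ennreal)
  also have "\<dots> = (\<Prod>b\<in>(Basis::(real^'n) set). (\<integral>\<^sup>+t. ennreal (std_normal_density t) \<partial>lborel))"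
    by (rule nn_integral_lborel_prod) auto
  also have "(\<integral>\<^sup>+t. ennreal (std_normal_density t) \<partial>lborel) = 1"
    by (subst nn_integral_eq_integral) auto
  finally show "emeasure (std_gauss :: (real^'n) measure) (space std_gauss) = 1" by simp
qed


lemma affine_meas: "(\<lambda>z::real^'n. mu + L *v z) \<in> borel_measurable borel"
  by (intro borel_measurable_continuous_onI continuous_intros linear_continuous_on
        matrix_vector_mul_bounded_linear)

lemma sets_gauss[measurable_cong]: "sets (gauss mu S) = sets borel"
  by (simp add: gauss_def)

lemma space_gauss[simp]: "space (gauss mu S) = UNIV"
  by (simp add: gauss_def)

lemma sq_zero:
  fixes L :: "real^'n^'n"
  assumes "L ** transpose L = 0"
  shows "L = 0"
proof -
  have "L $ i $ j = 0" for i j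
  proof -
    have "(L ** transpose L) $ i $ i = (\<Sum>k\<in>UNIV. L $ i $ k * L $ i $ k)"
      by (simp add: matrix_matrix_mult_def transpose_def)
    then have "(\<Sum>k\<in>UNIV. L $ i $ k * L $ i $ k) = 0" using assms by simp
    then have "\<forall>k\<in>UNIV. L $ i $ k * L $ i $ k = 0"
      by (subst (asm) sum_nonneg_eq_0_iff) auto
    then show ?thesis by simp
  qed
  then show ?thesis by (simp add: vec_eq_iff)
qed


lemma ln_integrable:
  fixes f :: "'s \<Rightarrow> real"
  assumes K: "prob_space K" and fm: "f \<in> borel_measurable K"
    and lo: "AE s in K. c \<le> f s" and up: "\<And>s. f s \<le> M" and c: "c > 0"
  shows "integrable K (\<lambda>s. ln (f s))"
proof -
  interpret prob_space K by fact
  show ?thesis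
  proof (rule integrable_const_bound[where B="\<bar>ln c\<bar> + \<bar>ln M\<bar>"])
    show "AE x in K. norm (ln (f x)) \<le> \<bar>ln c\<bar> + \<bar>ln M\<bar>"
      using lo
    proof eventually_elim
      case (elim s)
      have fp: "0 < f s" using elim c by linarith
      have "ln c \<le> ln (f s)" using elim c by simp
      moreover have "ln (f s) \<le> ln M" using up[of s] fp by simp
      ultimately show ?case by (simp add: abs_le_iff) linarith
    qed
  qed (use fm in measurable)
qed

lemma gibbs:
  fixes lam :: "'s measure" and ps q :: "'s \<Rightarrow> real"
  assumes ps_m[measurable]: "ps \<in> borel_measurable lam" and q_m[measurable]: "q \<in> borel_measurable lam"
    and ps_nn: "\<And>s. 0 \<le> ps s" and q_nn: "\<And>s. 0 \<le> q s"
    and ps_le: "\<And>s. ps s \<le> M" and q_le: "\<And>s. q s \<le> M"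
    and K: "prob_space (density lam (\<lambda>s. ennreal (ps s)))"
    and q_int: "(\<integral>\<^sup>+s. ennreal (q s) \<partial>lam) \<le> 1"
    and c: "c > 0"
    and qc: "AE s in density lam (\<lambda>s. ennreal (ps s)). c \<le> q s"
    and pc: "AE s in density lam (\<lambda>s. ennreal (ps s)). c \<le> ps s"
  shows "(\<integral>s. ln (q s) \<partial>density lam (\<lambda>s. ennreal (ps s))) \<le> (\<integral>s. ln (ps s) \<partial>density lam (\<lambda>s. ennreal (ps s)))"
    and "(\<integral>s. ln (q s) \<partial>density lam (\<lambda>s. ennreal (ps s))) = (\<integral>s. ln (ps s) \<partial>density lam (\<lambda>s. ennreal (ps s)))
         \<Longrightarrow> AE s in lam. q s = ps s"
proof -
  define K where "K = density lam (\<lambda>s. ennreal (ps s))"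
  interpret prob_space K using K unfolding K_def .
  define r where "r s = q s / ps s" for s
  have r_m'[measurable]: "r \<in> borel_measurable lam" unfolding r_def by measurable
  have r_m[measurable]: "r \<in> borel_measurable K" unfolding K_def by measurable
  have q_mK[measurable]: "q \<in> borel_measurable K" unfolding K_def by measurable
  have p_mK[measurable]: "ps \<in> borel_measurable K" unfolding K_def by measurable
  have r_nn: "0 \<le> r s" for s unfolding r_def using ps_nn q_nn by simp
  have pw: "ennreal (ps s) * ennreal (r s) = ennreal (q s) * indicator {s. 0 < ps s} s" for s
  proof (cases "ps s = 0")
    case True then show ?thesis using ps_nn[of s] by simp
  next
    case False
    then have "0 < ps s" using ps_nn[of s] by simp
    then show ?thesis using r_nn[of s] ps_nn[of s]
      by (simp add: ennreal_mult[symmetric] r_def)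
  qed
  have rN: "(\<integral>\<^sup>+s. ennreal (r s) \<partial>K) = (\<integral>\<^sup>+s. ennreal (q s) * indicator {s. 0 < ps s} s \<partial>lam)"
    unfolding K_def by (subst nn_integral_density) (auto simp: pw)
  have rN_le: "(\<integral>\<^sup>+s. ennreal (r s) \<partial>K) \<le> 1"
    unfolding rN
    by (rule order_trans[OF _ q_int]) (intro nn_integral_mono, simp add: mult_left_le indicator_def)
  have r_int: "integrable K r"
    by (rule integrableI_bounded) (use rN_le r_nn in \<open>auto intro: le_less_trans[OF _ ennreal_one_less_top]\<close>)
  have rE: "ennreal (\<integral>s. r s \<partial>K) = (\<integral>\<^sup>+s. ennreal (r s) \<partial>K)"
    by (rule nn_integral_eq_integral[symmetric]) (use r_int r_nn in auto)
  have r_le1: "(\<integral>s. r s \<partial>K) \<le> 1"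
    using rN_le unfolding rE[symmetric] by (simp add: ennreal_le_1)
  have lq: "integrable K (\<lambda>s. ln (q s))"
    unfolding K_def by (rule ln_integrable[OF K _ qc q_le c]) measurable
  have lp: "integrable K (\<lambda>s. ln (ps s))"
    unfolding K_def by (rule ln_integrable[OF K _ pc ps_le c]) measurable
  define h where "h s = r s - 1 - (ln (q s) - ln (ps s))" for s
  have h_int: "integrable K h" unfolding h_def using r_int lq lp by auto
  have hI: "(\<integral>s. h s \<partial>K) = (\<integral>s. r s \<partial>K) - 1 - ((\<integral>s. ln (q s) \<partial>K) - (\<integral>s. ln (ps s) \<partial>K))"
    unfolding h_def using r_int lq lp by (simp add: prob_space)
  have h_nn: "AE s in K. 0 \<le> h s"
    using qc pc unfolding K_def[symmetric]
  proof eventually_elim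
    case (elim s)
    then have "0 < q s" "0 < ps s" using c by linarith+
    then have "ln (q s) - ln (ps s) = ln (r s)" "0 < r s" unfolding r_def by (simp_all add: ln_div)
    then show ?case unfolding h_def using ln_le_minus_one[of "r s"] by simp
  qed
  have hI_nn: "0 \<le> (\<integral>s. h s \<partial>K)" by (rule integral_nonneg_AE[OF h_nn])
  show "(\<integral>s. ln (q s) \<partial>density lam (\<lambda>s. ennreal (ps s))) \<le> (\<integral>s. ln (ps s) \<partial>density lam (\<lambda>s. ennreal (ps s)))"
    using hI hI_nn r_le1 unfolding K_def by linarith
  assume eq: "(\<integral>s. ln (q s) \<partial>density lam (\<lambda>s. ennreal (ps s))) = (\<integral>s. ln (ps s) \<partial>density lam (\<lambda>s. ennreal (ps s)))"
  then have eqK: "(\<integral>s. ln (q s) \<partial>K) = (\<integral>s. ln (ps s) \<partial>K)" unfolding K_def .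
  have h0: "(\<integral>s. h s \<partial>K) = 0" and r1: "(\<integral>s. r s \<partial>K) = 1"
    using hI hI_nn r_le1 eqK by linarith+
  have "AE s in K. h s = 0"
    using integral_nonneg_eq_0_iff_AE[OF h_int h_nn] h0 by simp
  then have "AE s in K. q s = ps s"
    using qc pc unfolding K_def[symmetric]
  proof eventually_elim
    case (elim s)
    then have "0 < q s" "0 < ps s" using c by linarith+
    then have "ln (q s) - ln (ps s) = ln (r s)" "0 < r s" unfolding r_def by (simp_all add: ln_div)
    with elim have "ln (r s) = r s - 1" unfolding h_def by simp
    with \<open>0 < r s\<close> have "r s = 1" by (rule ln_eq_minus_one)
    then show ?case using \<open>0 < ps s\<close> unfolding r_def by simp
  qed
  then have A1: "AE s in lam. 0 < ps s \<longrightarrow> q s = ps s"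
    unfolding K_def by (subst (asm) AE_density) auto
  have N1: "(\<integral>\<^sup>+s. ennreal (q s) * indicator {s. 0 < ps s} s \<partial>lam) = 1"
    using rE rN r1 by simp
  have split: "(\<integral>\<^sup>+s. ennreal (q s) \<partial>lam) = (\<integral>\<^sup>+s. ennreal (q s) * indicator {s. 0 < ps s} s \<partial>lam)
      + (\<integral>\<^sup>+s. ennreal (q s) * indicator {s. \<not> 0 < ps s} s \<partial>lam)"
    by (subst nn_integral_add[symmetric]) (auto intro!: nn_integral_cong simp: indicator_def)
  have "1 + (\<integral>\<^sup>+s. ennreal (q s) * indicator {s. \<not> 0 < ps s} s \<partial>lam) \<le> 1 + 0"
    using q_int unfolding split N1 by simp
  then have "(\<integral>\<^sup>+s. ennreal (q s) * indicator {s. \<not> 0 < ps s} s \<partial>lam) = 0"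
    by (subst (asm) ennreal_add_left_cancel_le) auto
  then have A2: "AE s in lam. ennreal (q s) * indicator {s. \<not> 0 < ps s} s = 0"
    by (subst (asm) nn_integral_0_iff_AE) auto
  show "AE s in lam. q s = ps s"
    using A1 A2
  proof eventually_elim
    case (elim s)
    show ?case
    proof (cases "0 < ps s")
      case True with elim show ?thesis by simp
    next
      case False
      with elim have "q s = 0" using q_nn[of s] by (simp add: indicator_def)
      then show ?thesis using False ps_nn[of s] by simp
    qed
  qed
qed


lemma affine_meas_sg: "(\<lambda>z::real^'n. mu + L *v z) \<in> borel_measurable (std_gauss :: (real^'n) measure)"
  using affine_meas[of mu L] by (simp add: std_gauss_def)

lemma gauss_prob: "prob_space (gauss mu S)"
  unfolding gauss_def
  by (rule prob_space.prob_space_distr[OF std_gauss_prob]) (rule affine_meas_sg)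

lemma gauss_zero:
  fixes f :: "real^'n \<Rightarrow> real"
  assumes f: "f \<in> borel_measurable borel"
  shows "(\<integral>x. f x \<partial>gauss mu 0) = f mu"
proof -
  define L where "L = (SOME L :: real^'n^'n. L ** transpose L = 0)"
  have "L ** transpose L = 0" unfolding L_def by (rule someI[of _ 0]) simp
  then have L0: "L = 0" by (rule sq_zero)
  interpret G: prob_space "std_gauss :: (real^'n) measure" by (rule std_gauss_prob)
  have "(\<integral>x. f x \<partial>gauss mu 0) = (\<integral>z. f (mu + L *v z) \<partial>(std_gauss :: (real^'n) measure))"
    unfolding gauss_def L_def[symmetric]
    by (rule integral_distr) (simp_all add: affine_meas_sg f)
  also have "\<dots> = f mu" using L0 by (simp add: G.prob_space)
  finally show ?thesis .
qed


theorem lemma1: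
  fixes lam :: "'s measure"
    and D :: "('s \<times> 'a) measure"
    and p :: "real^'d \<Rightarrow> 's \<Rightarrow> 'a \<Rightarrow> 's \<Rightarrow> real"
    and xis :: "real^'d"
    and Phi :: "((real^'d) \<times> (real^'d^'d)) set"
    and M c :: real
  assumes lam_sf: "sigma_finite_measure lam"
    and D_prob: "prob_space D"
    and Phi_psd: "\<forall>phi\<in>Phi. psd (snd phi)"
    and opt_in: "(xis, 0) \<in> Phi"
    and p_meas: "(\<lambda>(xi, sa, s'). p xi (fst sa) (snd sa) s') \<in> borel_measurable (borel \<Otimes>\<^sub>M (D \<Otimes>\<^sub>M lam))"
    and p_kernel: "\<forall>xi s a. prob_space (kernel_meas lam p xi s a)"
    and p_bound: "\<forall>xi s a s'. 0 \<le> p xi s a s' \<and> p xi s a s' \<le> M"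
    and p_cont: "\<forall>s a s'. continuous_on UNIV (\<lambda>xi. p xi s a s')"
    and c_pos: "c > 0"
    and q_lower: "\<forall>phi\<in>Phi. AE sa in D. AE s' in kernel_meas lam p xis (fst sa) (snd sa).
                     c \<le> mix_density p phi (fst sa) (snd sa) s'"
    and ident: "\<forall>phi\<in>Phi. (AE sa in D. AE s' in lam.
                     mix_density p phi (fst sa) (snd sa) s' = p xis (fst sa) (snd sa) s')
                   \<longrightarrow> phi = (xis, 0)"
  shows "(\<forall>phi\<in>Phi. pop_loglik D lam p xis phi \<le> pop_loglik D lam p xis (xis, 0))
       \<and> (\<forall>phi\<in>Phi. pop_loglik D lam p xis phi = pop_loglik D lam p xis (xis, 0) \<longrightarrow> phi = (xis, 0))"
proof -
  interpret D: prob_space D by fact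
  interpret lam: sigma_finite_measure lam by fact
  interpret DL: pair_sigma_finite D lam
    by (intro pair_sigma_finite.intro D.sigma_finite_measure_axioms lam_sf)
  note pm[measurable] = p_meas
  define ps where "ps sa s' = p xis (fst sa) (snd sa) s'" for sa s'
  define q where "q phi sa s' = mix_density p phi (fst sa) (snd sa) s'" for phi sa s'
  define K where "K sa = kernel_meas lam p xis (fst sa) (snd sa)" for sa
  define g where "g phi sa = (\<integral>s'. ln (q phi sa s') \<partial>K sa)" for phi sa
  have L_eq: "pop_loglik D lam p xis phi = (\<integral>sa. g phi sa \<partial>D)" for phi
    unfolding pop_loglik_def g_def q_def K_def ..
  have K_eq: "K sa = density lam (\<lambda>s'. ennreal (ps sa s'))" for sa
    unfolding K_def kernel_meas_def ps_def ..
  have K_prob: "prob_space (K sa)" for sa unfolding K_def using p_kernel by blast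
  have p_nn: "0 \<le> p xi s a s'" and p_le: "p xi s a s' \<le> M" for xi s a s'
    using p_bound by auto
  have p_xi_m[measurable]: "(\<lambda>xi. p xi s a s') \<in> borel_measurable borel" for s a s'
    using p_cont by (intro borel_measurable_continuous_onI) auto
  have F1: "(\<lambda>x. p (fst x) (fst sa) (snd sa) (snd x)) \<in> borel_measurable (borel \<Otimes>\<^sub>M lam)"
    if sa: "sa \<in> space D" for sa
  proof -
    have "(\<lambda>x. (fst x, (sa, snd x))) \<in> measurable (borel \<Otimes>\<^sub>M lam) (borel \<Otimes>\<^sub>M (D \<Otimes>\<^sub>M lam))"
      using sa by measurable
    from measurable_compose[OF this pm] show ?thesis by (simp add: split_beta)
  qed
  have F2: "(\<lambda>s'. p xi (fst sa) (snd sa) s') \<in> borel_measurable lam"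
    if sa: "sa \<in> space D" for sa xi
  proof -
    have "(\<lambda>s'. (xi, (sa, s'))) \<in> measurable lam (borel \<Otimes>\<^sub>M (D \<Otimes>\<^sub>M lam))"
      using sa by measurable
    from measurable_compose[OF this pm] show ?thesis by simp
  qed
  have ps_m: "(\<lambda>x. ps (fst x) (snd x)) \<in> borel_measurable (D \<Otimes>\<^sub>M lam)"
  proof -
    have "(\<lambda>x. (xis, x)) \<in> measurable (D \<Otimes>\<^sub>M lam) (borel \<Otimes>\<^sub>M (D \<Otimes>\<^sub>M lam))"
      by measurable
    from measurable_compose[OF this pm] show ?thesis by (simp add: ps_def split_beta)
  qed
  have q_m: "(\<lambda>x. q phi (fst x) (snd x)) \<in> borel_measurable (D \<Otimes>\<^sub>M lam)" for phi
  proof -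
    interpret G: prob_space "gauss (fst phi) (snd phi)" by (rule gauss_prob)
    have "(\<lambda>(x, xi). p xi (fst (fst x)) (snd (fst x)) (snd x))
            \<in> borel_measurable ((D \<Otimes>\<^sub>M lam) \<Otimes>\<^sub>M gauss (fst phi) (snd phi))"
    proof -
      have "(\<lambda>y. (snd y, fst y)) \<in> measurable ((D \<Otimes>\<^sub>M lam) \<Otimes>\<^sub>M gauss (fst phi) (snd phi)) (borel \<Otimes>\<^sub>M (D \<Otimes>\<^sub>M lam))"
        by measurable
      from measurable_compose[OF this pm] show ?thesis by (simp add: split_beta)
    qed
    then have "(\<lambda>x. \<integral>xi. p xi (fst (fst x)) (snd (fst x)) (snd x) \<partial>gauss (fst phi) (snd phi)) \<in> borel_measurable (D \<Otimes>\<^sub>M lam)"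
      by (rule G.borel_measurable_lebesgue_integral[where f="\<lambda>x xi. p xi (fst (fst x)) (snd (fst x)) (snd x)", simplified])
    then show ?thesis by (simp add: q_def mix_density_def)
  qed
  have q_nn: "0 \<le> q phi sa s'" for phi sa s'
    unfolding q_def mix_density_def by (rule integral_nonneg_AE) (simp add: p_nn)
  have q_int: "integrable (gauss (fst phi) (snd phi)) (\<lambda>xi. p xi s a s')" for phi s a s'
  proof -
    interpret G: prob_space "gauss (fst phi) (snd phi)" by (rule gauss_prob)
    show ?thesis by (rule G.integrable_const_bound[where B=M]) (auto simp: p_nn p_le)
  qed
  have q_le: "q phi sa s' \<le> M" for phi sa s'
  proof -
    interpret G: prob_space "gauss (fst phi) (snd phi)" by (rule gauss_prob)
    show ?thesis unfolding q_def mix_density_def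
      by (rule G.integral_le_const[OF q_int]) (simp add: p_le)
  qed
  have q0: "q (xis, 0) sa s' = ps sa s'" for sa s'
    unfolding q_def mix_density_def ps_def by (simp add: gauss_zero)
  have q_lam[measurable]: "q phi sa \<in> borel_measurable lam" if "sa \<in> space D" for phi sa
    using measurable_Pair2[OF q_m that] by simp
  have ps_lam[measurable]: "ps sa \<in> borel_measurable lam" if "sa \<in> space D" for sa
    using measurable_Pair2[OF ps_m that] by simp
  have qN: "(\<integral>\<^sup>+s'. ennreal (q phi sa s') \<partial>lam) \<le> 1" if sa: "sa \<in> space D" for phi sa
  proof -
    interpret G: prob_space "gauss (fst phi) (snd phi)" by (rule gauss_prob)
    interpret GL: pair_sigma_finite "gauss (fst phi) (snd phi)" lam
      by (intro pair_sigma_finite.intro G.sigma_finite_measure_axioms lam_sf)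
    have e: "ennreal (q phi sa s') = (\<integral>\<^sup>+xi. ennreal (p xi (fst sa) (snd sa) s') \<partial>gauss (fst phi) (snd phi))" for s'
      unfolding q_def mix_density_def
      by (rule nn_integral_eq_integral[symmetric]) (auto simp: q_int p_nn)
    have fm: "(\<lambda>(xi, s'). ennreal (p xi (fst sa) (snd sa) s')) \<in> borel_measurable (gauss (fst phi) (snd phi) \<Otimes>\<^sub>M lam)"
    proof -
      have "(\<lambda>x. p (fst x) (fst sa) (snd sa) (snd x)) \<in> borel_measurable (gauss (fst phi) (snd phi) \<Otimes>\<^sub>M lam)"
        using F1[OF sa] by (simp cong: measurable_cong_sets[OF sets_pair_measure_cong[OF sets_gauss refl] refl])
      then show ?thesis by (simp add: split_beta)
    qed
    have inner: "(\<integral>\<^sup>+s'. ennreal (p xi (fst sa) (snd sa) s') \<partial>lam) = 1" for xi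
    proof -
      interpret Kx: prob_space "kernel_meas lam p xi (fst sa) (snd sa)" using p_kernel by blast
      have "emeasure (kernel_meas lam p xi (fst sa) (snd sa)) (space lam) = 1"
        using Kx.emeasure_space_1 by (simp add: kernel_meas_def)
      moreover have "emeasure (kernel_meas lam p xi (fst sa) (snd sa)) (space lam)
          = (\<integral>\<^sup>+s'. ennreal (p xi (fst sa) (snd sa) s') * indicator (space lam) s' \<partial>lam)"
        unfolding kernel_meas_def by (rule emeasure_density) (auto intro: measurable_compose[OF F2[OF sa]])
      moreover have "(\<integral>\<^sup>+s'. ennreal (p xi (fst sa) (snd sa) s') * indicator (space lam) s' \<partial>lam)
          = (\<integral>\<^sup>+s'. ennreal (p xi (fst sa) (snd sa) s') \<partial>lam)"
        by (rule nn_integral_cong) simp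
      ultimately show ?thesis by simp
    qed
    have "(\<integral>\<^sup>+s'. ennreal (q phi sa s') \<partial>lam)
        = (\<integral>\<^sup>+s'. (\<integral>\<^sup>+xi. ennreal (p xi (fst sa) (snd sa) s') \<partial>gauss (fst phi) (snd phi)) \<partial>lam)"
      by (simp add: e)
    also have "\<dots> = (\<integral>\<^sup>+xi. (\<integral>\<^sup>+s'. ennreal (p xi (fst sa) (snd sa) s') \<partial>lam) \<partial>gauss (fst phi) (snd phi))"
      by (rule GL.Fubini'[where f="\<lambda>xi s'. ennreal (p xi (fst sa) (snd sa) s')"]) (use fm in simp)
    also have "\<dots> = 1" using G.emeasure_space_1 by (simp add: inner)
    finally show ?thesis by simp
  qed
  have g_m: "g phi \<in> borel_measurable D" for phi
  proof -
    have "(\<lambda>x. ps (fst x) (snd x) * ln (q phi (fst x) (snd x))) \<in> borel_measurable (D \<Otimes>\<^sub>M lam)"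
      using ps_m q_m[of phi] by measurable
    then have "(\<lambda>sa. \<integral>s'. ps sa s' * ln (q phi sa s') \<partial>lam) \<in> borel_measurable D"
      by (intro lam.borel_measurable_lebesgue_integral) (simp add: split_beta)
    moreover have "g phi sa = (\<integral>s'. ps sa s' * ln (q phi sa s') \<partial>lam)" if "sa \<in> space D" for sa
      unfolding g_def K_eq
      by (subst integral_density) (auto simp: that ps_lam q_lam intro!: AE_I2, simp add: ps_def p_nn)
    ultimately show ?thesis by (subst measurable_cong) auto
  qed
  have gibbs_sa: "g phi sa \<le> g (xis, 0) sa \<and> (g phi sa = g (xis, 0) sa \<longrightarrow> (AE s' in lam. q phi sa s' = ps sa s'))"
    if sa: "sa \<in> space D" and l1: "AE s' in K sa. c \<le> q phi sa s'" and l0: "AE s' in K sa. c \<le> ps sa s'"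
    for phi sa
  proof -
    have ps_nn: "0 \<le> ps sa s" and ps_le: "ps sa s \<le> M" for s
      unfolding ps_def using p_nn p_le by auto
    note G = gibbs[of "ps sa" lam "q phi sa" M c, OF ps_lam[OF sa] q_lam[OF sa] ps_nn q_nn ps_le q_le
       K_prob[of sa, unfolded K_eq] qN[OF sa] c_pos l1[unfolded K_eq] l0[unfolded K_eq]]
    show ?thesis unfolding g_def K_eq using q0 G by simp
  qed
  have g_bound: "\<bar>g phi sa\<bar> \<le> \<bar>ln c\<bar> + \<bar>ln M\<bar>"
    if sa: "sa \<in> space D" and l1: "AE s' in K sa. c \<le> q phi sa s'" for phi sa
  proof -
    interpret Kp: prob_space "K sa" by (rule K_prob)
    have qmK: "q phi sa \<in> borel_measurable (K sa)" unfolding K_eq using q_lam[OF sa] by simp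
    have I: "integrable (K sa) (\<lambda>s. ln (q phi sa s))"
      by (rule ln_integrable[OF K_prob qmK l1 q_le c_pos])
    have "ln c \<le> g phi sa" unfolding g_def
      by (rule Kp.integral_ge_const[OF I]) (use l1 c_pos in \<open>auto elim!: eventually_mono\<close>)
    moreover have "g phi sa \<le> ln M" unfolding g_def
    proof (rule Kp.integral_le_const[OF I])
      show "AE x in K sa. ln (q phi sa x) \<le> ln M" using l1
      proof eventually_elim
        case (elim s)
        then have "0 < q phi sa s" using c_pos by linarith
        then show ?case using q_le[of phi sa s] by simp
      qed
    qed
    ultimately show ?thesis by linarith
  qed
  have AE_low: "AE sa in D. AE s' in K sa. c \<le> q phi sa s'" if "phi \<in> Phi" for phi
    using q_lower that unfolding K_def q_def by blast
  have AE_low0: "AE sa in D. AE s' in K sa. c \<le> ps sa s'"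
    using AE_low[OF opt_in] by (simp add: q0)
  have g_int: "integrable D (g phi)" if "phi \<in> Phi" for phi
  proof (rule D.integrable_const_bound[where B="\<bar>ln c\<bar> + \<bar>ln M\<bar>"])
    show "AE x in D. norm (g phi x) \<le> \<bar>ln c\<bar> + \<bar>ln M\<bar>"
      using AE_low[OF that] AE_space by eventually_elim (simp add: g_bound)
  qed (rule g_m)
  have AE_cmp: "AE sa in D. g phi sa \<le> g (xis, 0) sa \<and> (g phi sa = g (xis, 0) sa \<longrightarrow> (AE s' in lam. q phi sa s' = ps sa s'))"
    if "phi \<in> Phi" for phi
    using AE_low[OF that] AE_low0 AE_space by eventually_elim (rule gibbs_sa)
  show ?thesis
  proof (intro conjI ballI impI)
    fix phi assume ph: "phi \<in> Phi"
    show "pop_loglik D lam p xis phi \<le> pop_loglik D lam p xis (xis, 0)"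
      unfolding L_eq
      by (rule integral_mono_AE[OF g_int[OF ph] g_int[OF opt_in]]) (use AE_cmp[OF ph] in auto)
  next
    fix phi assume ph: "phi \<in> Phi" and eq: "pop_loglik D lam p xis phi = pop_loglik D lam p xis (xis, 0)"
    have "(\<integral>sa. g (xis, 0) sa - g phi sa \<partial>D) = 0"
      using eq g_int[OF ph] g_int[OF opt_in] unfolding L_eq by simp
    then have "AE sa in D. g (xis, 0) sa - g phi sa = 0"
      by (subst (asm) integral_nonneg_eq_0_iff_AE) (use g_int[OF ph] g_int[OF opt_in] AE_cmp[OF ph] in auto)
    then have "AE sa in D. AE s' in lam. q phi sa s' = ps sa s'"
      using AE_cmp[OF ph] by eventually_elim auto
    then show "phi = (xis, 0)"
      using ident ph unfolding q_def ps_def by blast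
  qed
qed

end
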